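(* Let $n_1>n_2\geq 2$ be integers. Let $X$ consist of the vectors $(j,j,0),(j,j,1)$ for $j\in\{1,\ldots,n_2\}$, the vectors $(n_2+k,1,0),(n_2+k,n_2,1)$ for $k\in\{0,1,\ldots,n_1-n_2-1\}$, and the vector $(n_1,n_2,1)$. Let $\mathcal B$ consist of all $3$-element subsets $\{\alpha_1,\alpha_2,\alpha_3\}\subseteq X$ such that for each coordinate $j\in\{1,2,3\}$ the set $\{\alpha_{1(j)},\alpha_{2(j)},\alpha_{3(j)}\}$ of $j$-th entries has exactly $2$ elements, together with the additional triple $\{(1,1,0),(n_2,1,0),(n_2,n_2,0)\}$. Then the $3$-uniform bi-hypergraph $\mathcal H_{n_1,n_2}=(X,\mathcal B)$ is a one-realization of $\{n_1,n_2\}$.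
   Context: A bi-hypergraph $(X,\mathcal B)$ is a mixed hypergraph whose $\mathcal C$-edges and $\mathcal D$-edges both equal $\mathcal B$. A strict $k$-coloring is a partition of $X$ into exactly $k$ nonempty classes such that every edge of $\mathcal B$ contains two vertices of a common class and two vertices of distinct classes. The feasible set is the set of $k$ admitting a strict $k$-coloring; the chromatic spectrum lists, for $k=1,\ldots,\max$ of the feasible set, the number of strict $k$-colorings (as partitions). A one-realization of a set $S$ is a mixed hypergraph whose feasible set is $S$ and whose chromatic spectrum has all entries in $\{0,1\}$. $\alpha_{l(j)}$ denotes the $j$-th entry of the vector $\alpha_l$. *)

theory Defs
  imports Main
begin

definition is_partition :: "'a set \<Rightarrow> 'a set set \<Rightarrow> bool" where
  "is_partition X P \<longleftrightarrow> (\<forall>A\<in>P. A \<noteq> {} \<and> A \<subseteq> X) \<and> \<Union>P = X \<and>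
     (\<forall>A\<in>P. \<forall>B\<in>P. A \<noteq> B \<longrightarrow> A \<inter> B = {})"

definition strict_coloring ::
  "'a set \<Rightarrow> 'a set set \<Rightarrow> 'a set set \<Rightarrow> 'a set set \<Rightarrow> nat \<Rightarrow> bool" where
  "strict_coloring X C D P k \<longleftrightarrow> is_partition X P \<and> card P = k \<and>
     (\<forall>E\<in>C. \<exists>x\<in>E. \<exists>y\<in>E. x \<noteq> y \<and> (\<exists>A\<in>P. x \<in> A \<and> y \<in> A)) \<and>
     (\<forall>E\<in>D. \<exists>x\<in>E. \<exists>y\<in>E. \<not> (\<exists>A\<in>P. x \<in> A \<and> y \<in> A))"

definition feasible_set :: "'a set \<Rightarrow> 'a set set \<Rightarrow> 'a set set \<Rightarrow> nat set" where
  "feasible_set X C D = {k. \<exists>P. strict_coloring X C D P k}"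

definition spectrum_entry :: "'a set \<Rightarrow> 'a set set \<Rightarrow> 'a set set \<Rightarrow> nat \<Rightarrow> nat" where
  "spectrum_entry X C D k = card {P. strict_coloring X C D P k}"

definition one_realization :: "'a set \<Rightarrow> 'a set set \<Rightarrow> 'a set set \<Rightarrow> nat set \<Rightarrow> bool" where
  "one_realization X C D S \<longleftrightarrow> feasible_set X C D = S \<and>
     (\<forall>k. finite {P. strict_coloring X C D P k} \<and> spectrum_entry X C D k \<in> {0, 1})"

abbreviation bi_one_realization :: "'a set \<Rightarrow> 'a set set \<Rightarrow> nat set \<Rightarrow> bool" where
  "bi_one_realization X B S \<equiv> one_realization X B B S"

type_synonym vec3 = "nat \<times> nat \<times> nat"

definition coord :: "nat \<Rightarrow> vec3 \<Rightarrow> nat" where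
  "coord j v = (if j = 1 then fst v else if j = 2 then fst (snd v) else snd (snd v))"

definition HX :: "nat \<Rightarrow> nat \<Rightarrow> vec3 set" where
  "HX n1 n2 = {(j, j, 0) | j. 1 \<le> j \<and> j \<le> n2} \<union> {(j, j, 1) | j. 1 \<le> j \<and> j \<le> n2}
     \<union> {(n2 + k, 1, 0) | k. k < n1 - n2} \<union> {(n2 + k, n2, 1) | k. k < n1 - n2}
     \<union> {(n1, n2, 1)}"

definition HB :: "nat \<Rightarrow> nat \<Rightarrow> vec3 set set" where
  "HB n1 n2 = {E. E \<subseteq> HX n1 n2 \<and> card E = 3 \<and> (\<forall>j\<in>{1,2,3}. card (coord j ` E) = 2)}
     \<union> {{(1, 1, 0), (n2, 1, 0), (n2, n2, 0)}}"

end

theory Submission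
  imports Defs
begin


definition rel :: "'a set set \<Rightarrow> 'a \<Rightarrow> 'a \<Rightarrow> bool" where
  "rel P x y \<longleftrightarrow> (\<exists>A\<in>P. x \<in> A \<and> y \<in> A)"

lemma rel_sym: "rel P x y \<Longrightarrow> rel P y x" unfolding rel_def by blast

lemma rel_trans: "is_partition X P \<Longrightarrow> rel P x y \<Longrightarrow> rel P y z \<Longrightarrow> rel P x z"
  unfolding rel_def is_partition_def by blast

lemma rel_refl: "is_partition X P \<Longrightarrow> x \<in> X \<Longrightarrow> rel P x x"
  unfolding rel_def is_partition_def by blast

definition one3 :: "bool \<Rightarrow> bool \<Rightarrow> bool \<Rightarrow> bool" where
  "one3 a b c \<longleftrightarrow> (a \<and> \<not> b \<and> \<not> c) \<or> (\<not> a \<and> b \<and> \<not> c) \<or> (\<not> a \<and> \<not> b \<and> c)"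

lemma edge_one:
  assumes "strict_coloring X B B P k" "{x,y,z} \<in> B" "x \<noteq> y" "y \<noteq> z" "x \<noteq> z"
  shows "one3 (rel P x y) (rel P x z) (rel P y z)"
proof -
  have p: "is_partition X P" using assms(1) unfolding strict_coloring_def by blast
  have c: "\<exists>u\<in>{x,y,z}. \<exists>v\<in>{x,y,z}. u \<noteq> v \<and> rel P u v"
    using assms(1,2) unfolding strict_coloring_def rel_def by blast
  have d: "\<exists>u\<in>{x,y,z}. \<exists>v\<in>{x,y,z}. \<not> rel P u v"
    using assms(1,2) unfolding strict_coloring_def rel_def by blast
  have s: "\<And>u v. rel P u v \<Longrightarrow> rel P v u" by (rule rel_sym)
  have t: "\<And>u v w. rel P u v \<Longrightarrow> rel P v w \<Longrightarrow> rel P u w" using rel_trans[OF p] by blast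
  have r: "\<And>u. rel P u v \<Longrightarrow> rel P v v" using s t by blast
  show ?thesis unfolding one3_def
  proof -
    from c have c': "rel P x y \<or> rel P x z \<or> rel P y z" using s by blast
    from d have d': "\<not> rel P x y \<or> \<not> rel P x z \<or> \<not> rel P y z"
      using s t by (metis empty_iff insert_iff)
    show "(rel P x y \<and> \<not> rel P x z \<and> \<not> rel P y z) \<or> (\<not> rel P x y \<and> rel P x z \<and> \<not> rel P y z) \<or> (\<not> rel P x y \<and> \<not> rel P x z \<and> rel P y z)"
      using c' d' s t by metis
  qed
qed

definition two :: "nat \<Rightarrow> nat \<Rightarrow> nat \<Rightarrow> bool" where
  "two a b c \<longleftrightarrow> (a = b \<and> b \<noteq> c) \<or> (a = c \<and> a \<noteq> b) \<or> (b = c \<and> a \<noteq> b)"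

lemma card_two: "two a b c \<Longrightarrow> card {a,b,c} = 2"
  unfolding two_def by (auto simp: card_insert_if)

lemma HB_I:
  assumes "x \<in> HX n1 n2" "y \<in> HX n1 n2" "z \<in> HX n1 n2" "x \<noteq> y" "y \<noteq> z" "x \<noteq> z"
    "two (fst x) (fst y) (fst z)" "two (fst (snd x)) (fst (snd y)) (fst (snd z))"
    "two (snd (snd x)) (snd (snd y)) (snd (snd z))"
  shows "{x,y,z} \<in> HB n1 n2"
proof -
  have "card {x,y,z} = 3" using assms(4-6) by (simp add: card_insert_if)
  moreover have "\<forall>j\<in>{1,2,3}. card (coord j ` {x,y,z}) = 2"
    using assms(7-9) card_two by (auto simp: coord_def)
  ultimately show ?thesis using assms(1-3) unfolding HB_def by blast
qed

lemma a_in: "1 \<le> j \<Longrightarrow> j \<le> n2 \<Longrightarrow> (j,j,0) \<in> HX n1 n2" unfolding HX_def by blast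
lemma b_in: "1 \<le> j \<Longrightarrow> j \<le> n2 \<Longrightarrow> (j,j,1) \<in> HX n1 n2" unfolding HX_def by blast
lemma c_in: "k < n1 - n2 \<Longrightarrow> (n2+k,1,0) \<in> HX n1 n2" unfolding HX_def by blast
lemma d_in: "k < n1 - n2 \<Longrightarrow> (n2+k,n2,1) \<in> HX n1 n2" unfolding HX_def by blast
lemma e_in: "(n1,n2,1) \<in> HX n1 n2" unfolding HX_def by blast

lemma HX_cases:
  assumes "x \<in> HX n1 n2"
  obtains (a) j where "1 \<le> j" "j \<le> n2" "x = (j,j,0)"
    | (b) j where "1 \<le> j" "j \<le> n2" "x = (j,j,1)"
    | (c) k where "k < n1 - n2" "x = (n2+k,1,0)"
    | (d) k where "k < n1 - n2" "x = (n2+k,n2,1)"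
    | (e) "x = (n1,n2,1)"
  using assms unfolding HX_def by blast



lemma HX_range:
  assumes "x \<in> HX n1 n2" "n2 < n1" "1 \<le> n2"
  shows "1 \<le> fst x \<and> fst x \<le> n1 \<and> 1 \<le> fst (snd x) \<and> fst (snd x) \<le> n2 \<and> snd (snd x) \<le> 1"
  using assms by (cases rule: HX_cases) auto

context
  fixes n1 n2 :: nat and P :: "vec3 set set" and k :: nat
  assumes n: "n2 < n1" "2 \<le> n2" and sc: "strict_coloring (HX n1 n2) (HB n1 n2) (HB n1 n2) P k"
begin

abbreviation "R \<equiv> rel P"

lemma p: "is_partition (HX n1 n2) P" using sc unfolding strict_coloring_def by blast

lemma Rs: "R x y \<Longrightarrow> R y x" by (rule rel_sym)
lemma Rt: "R x y \<Longrightarrow> R y z \<Longrightarrow> R x z" using rel_trans[OF p] .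
lemma Rr: "x \<in> HX n1 n2 \<Longrightarrow> R x x" using rel_refl[OF p] .

lemma E: "{x,y,z} \<in> HB n1 n2 \<Longrightarrow> x \<noteq> y \<Longrightarrow> y \<noteq> z \<Longrightarrow> x \<noteq> z \<Longrightarrow> one3 (R x y) (R x z) (R y z)"
  using edge_one[OF sc] by blast

lemma G1:
  assumes "1 \<le> j" "j \<le> n2" "z \<in> HX n1 n2" "fst z \<noteq> j" "fst (snd z) \<noteq> j"
  shows "one3 (R (j,j,0) (j,j,1)) (R (j,j,0) z) (R (j,j,1) z)"
proof -
  obtain z1 z2 z3 where z: "z = (z1,z2,z3)" by (cases z) auto
  have "z3 \<le> 1" using HX_range[OF assms(3)] n z by auto
  hence "{(j,j,0),(j,j,1),z} \<in> HB n1 n2"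
    using assms z a_in b_in by (intro HB_I) (auto simp: two_def)
  thus ?thesis using E assms z by auto
qed

lemma E3: assumes "1 \<le> i" "i < n1 - n2"
  shows "one3 (R (n2+i,1,0) (n2,1,0)) (R (n2+i,1,0) (n2,n2,1)) (R (n2,1,0) (n2,n2,1))"
proof -
  have "{(n2+i,1,0),(n2+0,1,0),(n2,n2,1)} \<in> HB n1 n2"
    using assms n c_in[of i n1 n2] c_in[of 0 n1 n2] b_in[of n2 n2 n1]
    by (intro HB_I) (auto simp: two_def)
  thus ?thesis using E assms n by auto
qed

lemma E5: assumes "1 \<le> i" "i < n1 - n2"
  shows "one3 (R (n2+i,1,0) (n2,1,0)) (R (n2+i,1,0) (n2+i,n2,1)) (R (n2,1,0) (n2+i,n2,1))"
proof -
  have "{(n2+i,1,0),(n2+0,1,0),(n2+i,n2,1)} \<in> HB n1 n2"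
    using assms n c_in[of i n1 n2] c_in[of 0 n1 n2] d_in[of i n1 n2]
    by (intro HB_I) (auto simp: two_def)
  thus ?thesis using E assms n by auto
qed

lemma E6: assumes "1 \<le> i" "i < n1 - n2"
  shows "one3 (R (n2+i,n2,1) (n2,n2,1)) (R (n2+i,n2,1) (n2,1,0)) (R (n2,n2,1) (n2,1,0))"
proof -
  have "{(n2+i,n2,1),(n2,n2,1),(n2+0,1,0)} \<in> HB n1 n2"
    using assms n d_in[of i n1 n2] c_in[of 0 n1 n2] b_in[of n2 n2 n1]
    by (intro HB_I) (auto simp: two_def)
  thus ?thesis using E assms n by auto
qed

lemma E7: assumes "1 \<le> i" "i < n1 - n2" "x \<in> HX n1 n2" "fst x \<noteq> n2 + i" "fst (snd x) = 1 \<or> fst (snd x) = n2"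
  shows "one3 (R (n2+i,1,0) (n2+i,n2,1)) (R (n2+i,1,0) x) (R (n2+i,n2,1) x)"
proof -
  obtain z1 z2 z3 where z: "x = (z1,z2,z3)" by (cases x) auto
  have "z3 \<le> 1" using HX_range[OF assms(3)] n z by auto
  hence "{(n2+i,1,0),(n2+i,n2,1),x} \<in> HB n1 n2"
    using assms n z c_in[of i n1 n2] d_in[of i n1 n2]
    by (intro HB_I) (auto simp: two_def)
  thus ?thesis using E assms n z by auto
qed

lemma E8: "one3 (R (n1,n2,1) (n2,1,0)) (R (n1,n2,1) (n2,n2,0)) (R (n2,1,0) (n2,n2,0))"
proof -
  have "{(n1,n2,1),(n2+0,1,0),(n2,n2,0)} \<in> HB n1 n2"
    using n e_in c_in[of 0 n1 n2] a_in[of n2 n2 n1]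
    by (intro HB_I) (auto simp: two_def)
  thus ?thesis using E n by auto
qed

lemma ET: "one3 (R (1,1,0) (n2,1,0)) (R (1,1,0) (n2,n2,0)) (R (n2,1,0) (n2,n2,0))"
proof -
  have "{(1,1,0),(n2,1,0),(n2,n2,0)} \<in> HB n1 n2" unfolding HB_def by blast
  thus ?thesis using E n by auto
qed

lemma EK1: "one3 (R (1,1,1) (n2,1,0)) (R (1,1,1) (n2,n2,0)) (R (n2,1,0) (n2,n2,0))"
proof -
  have "{(1,1,1),(n2+0,1,0),(n2,n2,0)} \<in> HB n1 n2"
    using n b_in[of 1 n2 n1] c_in[of 0 n1 n2] a_in[of n2 n2 n1]
    by (intro HB_I) (auto simp: two_def)
  thus ?thesis using E n by auto
qed

lemma EK2: "one3 (R (1,1,0) (n2,1,0)) (R (1,1,0) (n2,n2,1)) (R (n2,1,0) (n2,n2,1))"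
proof -
  have "{(1,1,0),(n2+0,1,0),(n2,n2,1)} \<in> HB n1 n2"
    using n a_in[of 1 n2 n1] c_in[of 0 n1 n2] b_in[of n2 n2 n1]
    by (intro HB_I) (auto simp: two_def)
  thus ?thesis using E n by auto
qed

lemma EK3: "one3 (R (1,1,1) (n2,1,0)) (R (1,1,1) (n2,n2,1)) (R (n2,1,0) (n2,n2,1))"
proof -
  have "{(1,1,1),(n2+0,1,0),(n2,n2,1)} \<in> HB n1 n2"
    using n b_in[of 1 n2 n1] c_in[of 0 n1 n2] b_in[of n2 n2 n1]
    by (intro HB_I) (auto simp: two_def)
  thus ?thesis using E n by auto
qed


lemma K:
  "R (1,1,0) (1,1,1) \<and> \<not> R (1,1,0) (n2,n2,0) \<and> R (n2,n2,0) (n2,n2,1) \<and>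
   ((R (n2,1,0) (n2,n2,0) \<and> \<not> R (n2,1,0) (1,1,0)) \<or> (R (n2,1,0) (1,1,0) \<and> \<not> R (n2,1,0) (n2,n2,0)))"
proof -
  have g1: "one3 (R (1,1,0) (1,1,1)) (R (1,1,0) (n2,n2,0)) (R (1,1,1) (n2,n2,0))"
    using G1[of 1 "(n2,n2,0)"] n a_in[of n2 n2 n1] by auto
  have g2: "one3 (R (1,1,0) (1,1,1)) (R (1,1,0) (n2,n2,1)) (R (1,1,1) (n2,n2,1))"
    using G1[of 1 "(n2,n2,1)"] n b_in[of n2 n2 n1] by auto
  have g3: "one3 (R (n2,n2,0) (n2,n2,1)) (R (n2,n2,0) (1,1,0)) (R (n2,n2,1) (1,1,0))"
    using G1[of n2 "(1,1,0)"] n a_in[of 1 n2 n1] by auto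
  have g4: "one3 (R (n2,n2,0) (n2,n2,1)) (R (n2,n2,0) (1,1,1)) (R (n2,n2,1) (1,1,1))"
    using G1[of n2 "(1,1,1)"] n b_in[of 1 n2 n1] by auto
  have nAA: "\<not> R (1,1,0) (n2,n2,0)"
  proof
    assume h: "R (1,1,0) (n2,n2,0)"
    have 1: "\<not> R (1,1,0) (n2,1,0)" "\<not> R (n2,1,0) (n2,n2,0)" using ET h by (auto simp: one3_def)
    have 2: "\<not> R (1,1,1) (n2,n2,0)" using g1 h by (auto simp: one3_def)
    have 3: "\<not> R (1,1,0) (n2,n2,1)" using g3 Rs[OF h] Rs by (auto simp: one3_def)
    have 4: "R (1,1,1) (n2,1,0)" using EK1 1 2 by (auto simp: one3_def)
    have 5: "R (n2,1,0) (n2,n2,1)" using EK2 1 3 by (auto simp: one3_def)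
    show False using EK3 4 5 Rt[OF 4 5] by (auto simp: one3_def)
  qed
  have et: "R (1,1,0) (n2,1,0) \<and> \<not> R (n2,1,0) (n2,n2,0) \<or> \<not> R (1,1,0) (n2,1,0) \<and> R (n2,1,0) (n2,n2,0)"
    using ET nAA by (auto simp: one3_def)
  then show ?thesis
  proof
    assume h: "R (1,1,0) (n2,1,0) \<and> \<not> R (n2,1,0) (n2,n2,0)"
    have 1: "\<not> R (n2,1,0) (n2,n2,1)" "\<not> R (1,1,0) (n2,n2,1)" using EK2 h by (auto simp: one3_def)
    have 2: "R (n2,n2,0) (n2,n2,1)" using g3 nAA 1 Rs by (auto simp: one3_def)
    have 3: "\<not> R (1,1,1) (n2,n2,0)" using g4 2 Rs by (auto simp: one3_def)
    have 4: "R (1,1,1) (n2,1,0)" using EK1 3 h by (auto simp: one3_def)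
    have 5: "R (1,1,0) (1,1,1)" using Rt[OF conjunct1[OF h] Rs[OF 4]] .
    show ?thesis using 5 nAA 2 h Rs by blast
  next
    assume h: "\<not> R (1,1,0) (n2,1,0) \<and> R (n2,1,0) (n2,n2,0)"
    have 1: "\<not> R (1,1,1) (n2,n2,0)" using EK1 h by (auto simp: one3_def)
    have 2: "R (1,1,0) (1,1,1)" using g1 nAA 1 by (auto simp: one3_def)
    have 3: "\<not> R (1,1,0) (n2,n2,1)" using g2 2 by (auto simp: one3_def)
    have 4: "R (n2,1,0) (n2,n2,1)" using EK2 3 h by (auto simp: one3_def)
    have 5: "R (n2,n2,0) (n2,n2,1)" using Rt[OF Rs[OF conjunct2[OF h]] 4] .
    show ?thesis using 5 nAA 2 h Rs by blast
  qed
qed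


lemma ab_all: assumes "1 \<le> j" "j \<le> n2" shows "R (j,j,0) (j,j,1)"
proof (cases "j = 1")
  case True thus ?thesis using K by simp
next
  case False
  have r: "R (1,1,0) (1,1,1)" using K by simp
  have g1: "one3 (R (1,1,0) (1,1,1)) (R (1,1,0) (j,j,0)) (R (1,1,1) (j,j,0))"
    using G1[of 1 "(j,j,0)"] n a_in[of j n2 n1] assms False by auto
  have g2: "one3 (R (1,1,0) (1,1,1)) (R (1,1,0) (j,j,1)) (R (1,1,1) (j,j,1))"
    using G1[of 1 "(j,j,1)"] n b_in[of j n2 n1] assms False by auto
  have g3: "one3 (R (j,j,0) (j,j,1)) (R (j,j,0) (1,1,0)) (R (j,j,1) (1,1,0))"
    using G1[of j "(1,1,0)"] n a_in[of 1 n2 n1] assms False by auto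
  show ?thesis using g1 g2 g3 r Rs by (auto simp: one3_def)
qed

lemma Gn: assumes "1 \<le> j" "j \<le> n2" "z \<in> HX n1 n2" "fst z \<noteq> j" "fst (snd z) \<noteq> j"
  shows "\<not> R (j,j,0) z"
  using G1[OF assms] ab_all[OF assms(1,2)] by (auto simp: one3_def)

lemma aa_ne: assumes "1 \<le> i" "i \<le> n2" "1 \<le> j" "j \<le> n2" "i \<noteq> j"
  shows "\<not> R (i,i,0) (j,j,0)"
  using Gn[of i "(j,j,0)"] assms a_in[of j n2 n1] by auto

definition g :: "nat \<Rightarrow> vec3" where
  "g v = (if v \<le> n2 then (v,v,0) else if v < n1 then (v,1,0) else (n1,n2,1))"

lemma I_cd: assumes I: "R (n2,1,0) (n2,n2,0)" and i: "1 \<le> i" "i < n1 - n2"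
  shows "R (n2+i,1,0) (n2+i,n2,1)"
proof -
  have b: "R (n2,1,0) (n2,n2,1)" using Rt[OF I] K by blast
  have 1: "\<not> R (n2+i,1,0) (n2,1,0)" using E3[OF i] b by (auto simp: one3_def)
  have 2: "\<not> R (n2+i,n2,1) (n2,1,0)" using E6[OF i] b Rs by (auto simp: one3_def)
  show ?thesis using E5[OF i] 1 2 Rs by (auto simp: one3_def)
qed

lemma I_pos: assumes I: "R (n2,1,0) (n2,n2,0)" and x: "x \<in> HX n1 n2"
  shows "R x (g (fst x))"
  using x
proof (cases rule: HX_cases)
  case (a j) thus ?thesis using Rr x by (simp add: g_def)
next
  case (b j) thus ?thesis using ab_all[of j] Rs by (simp add: g_def)
next
  case (c i)
  show ?thesis
  proof (cases "i = 0")
    case True thus ?thesis using c I by (simp add: g_def)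
  next
    case False
    have "n2 + i < n1" using c by auto
    thus ?thesis using c Rr x n False by (simp add: g_def)
  qed
next
  case (d i)
  show ?thesis
  proof (cases "i = 0")
    case True thus ?thesis using d ab_all[of n2] n Rs by (simp add: g_def)
  next
    case False
    have "R (n2+i,n2,1) (n2+i,1,0)" using I_cd[OF I, of i] False d Rs by auto
    moreover have "n2 + i < n1" using d by auto
    ultimately show ?thesis using d False n by (simp add: g_def)
  qed
next
  case e thus ?thesis using Rr x n by (simp add: g_def)
qed

lemma I_neg0: assumes I: "R (n2,1,0) (n2,n2,0)" and uv: "1 \<le> u" "u < v" "v \<le> n1"
  shows "\<not> R (g u) (g v)"
proof (cases "v \<le> n2")
  case True thus ?thesis using aa_ne[of u v] uv by (simp add: g_def)
next
  case v: False
  show ?thesis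
  proof (cases "u \<le> n2")
    case u: True
    show ?thesis
    proof (cases "v < n1")
      case vl: True
      define i where "i = v - n2"
      have i: "1 \<le> i" "i < n1 - n2" "v = n2 + i" using v vl uv unfolding i_def by auto
      show ?thesis
      proof (cases "u = 1")
        case True
        have "one3 (R (n2+i,1,0) (n2+i,n2,1)) (R (n2+i,1,0) (1,1,0)) (R (n2+i,n2,1) (1,1,0))"
          using E7[OF i(1,2), of "(1,1,0)"] a_in[of 1 n2 n1] n i by auto
        hence "\<not> R (n2+i,1,0) (1,1,0)" using I_cd[OF I i(1,2)] by (auto simp: one3_def)
        thus ?thesis using True u v vl i Rs by (auto simp: g_def)
      next
        case False
        have "\<not> R (u,u,0) (n2+i,1,0)" using Gn[of u "(n2+i,1,0)"] c_in[of i n1 n2] False u uv i by auto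
        thus ?thesis using u v vl i by (auto simp: g_def)
      qed
    next
      case vl: False
      hence vn: "v = n1" using uv by auto
      show ?thesis
      proof (cases "u = n2")
        case True
        have "R (n2,n2,0) (n2,1,0)" using I Rs by blast
        hence "\<not> R (n1,n2,1) (n2,n2,0)" using E8 I by (auto simp: one3_def)
        thus ?thesis using True vn n Rs by (auto simp: g_def)
      next
        case False
        have "\<not> R (u,u,0) (n1,n2,1)" using Gn[of u "(n1,n2,1)"] e_in False u uv n by auto
        thus ?thesis using u vn n by (auto simp: g_def)
      qed
    qed
  next
    case u: False
    define i where "i = u - n2"
    have i: "1 \<le> i" "i < n1 - n2" "u = n2 + i" using u uv unfolding i_def by auto
    have cd: "R (n2+i,1,0) (n2+i,n2,1)" using I_cd[OF I i(1,2)] .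
    have gv: "g v \<in> HX n1 n2" "fst (g v) = v" "fst (snd (g v)) = 1 \<or> fst (snd (g v)) = n2"
      using v uv c_in[of "v - n2" n1 n2] e_in[of n1 n2] by (auto simp: g_def)
    have "\<not> R (n2+i,1,0) (g v)" using E7[OF i(1,2) gv(1)] gv i uv cd by (auto simp: one3_def)
    thus ?thesis using i u uv by (auto simp: g_def)
  qed
qed

lemma I_rel: assumes I: "R (n2,1,0) (n2,n2,0)" and x: "x \<in> HX n1 n2" and y: "y \<in> HX n1 n2"
  shows "R x y \<longleftrightarrow> fst x = fst y"
proof
  assume "fst x = fst y"
  thus "R x y" using I_pos[OF I x] I_pos[OF I y] Rt Rs by metis
next
  assume r: "R x y"
  have "R (g (fst x)) (g (fst y))" using I_pos[OF I x] I_pos[OF I y] Rt Rs r by metis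
  moreover have "1 \<le> fst x" "fst x \<le> n1" "1 \<le> fst y" "fst y \<le> n1"
    using HX_range[OF x] HX_range[OF y] n by auto
  ultimately show "fst x = fst y" using I_neg0[OF I] Rs
    by (metis linorder_neqE_nat)
qed

lemma II_pos: assumes II: "R (n2,1,0) (1,1,0)" and x: "x \<in> HX n1 n2"
  shows "R x (fst (snd x), fst (snd x), 0)"
  using x
proof (cases rule: HX_cases)
  case (a j) thus ?thesis using Rr x by simp
next
  case (b j) thus ?thesis using ab_all[of j] Rs by simp
next
  case (c i)
  show ?thesis
  proof (cases "i = 0")
    case True thus ?thesis using c II by simp
  next
    case False
    have i: "1 \<le> i" "i < n1 - n2" using False c by auto
    have nb: "\<not> R (n2,1,0) (n2,n2,1)" using K II Rt Rs by blast
    have "\<not> R (n2,n2,0) (n2+i,1,0)" using Gn[of n2 "(n2+i,1,0)"] c_in[of i n1 n2] i n by auto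
    hence "\<not> R (n2+i,1,0) (n2,n2,1)" using K Rt Rs by blast
    hence "R (n2+i,1,0) (n2,1,0)" using E3[OF i] nb by (auto simp: one3_def)
    thus ?thesis using c Rt[OF _ II] by simp
  qed
next
  case (d i)
  show ?thesis
  proof (cases "i = 0")
    case True thus ?thesis using d ab_all[of n2] n Rs by simp
  next
    case False
    have i: "1 \<le> i" "i < n1 - n2" using False d by auto
    have nb: "\<not> R (n2,1,0) (n2,n2,1)" using K II Rt Rs by blast
    have "\<not> R (n2,n2,0) (n2+i,1,0)" using Gn[of n2 "(n2+i,1,0)"] c_in[of i n1 n2] i n by auto
    hence "\<not> R (n2+i,1,0) (n2,n2,1)" using K Rt Rs by blast
    hence ci: "R (n2+i,1,0) (n2,1,0)" using E3[OF i] nb by (auto simp: one3_def)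
    hence "\<not> R (n2,1,0) (n2+i,n2,1)" using E5[OF i] by (auto simp: one3_def)
    hence "R (n2+i,n2,1) (n2,n2,1)" using E6[OF i] nb Rs by (auto simp: one3_def)
    thus ?thesis using d K Rt Rs by (metis fst_conv snd_conv)
  qed
next
  case e
  have na: "\<not> R (n2,1,0) (n2,n2,0)" using K II Rt Rs by blast
  have "\<not> R (1,1,0) (n1,n2,1)" using Gn[of 1 "(n1,n2,1)"] e_in[of n1 n2] n by auto
  hence "\<not> R (n1,n2,1) (n2,1,0)" using II Rt Rs by blast
  hence "R (n1,n2,1) (n2,n2,0)" using E8 na by (auto simp: one3_def)
  thus ?thesis using e by simp
qed

lemma II_rel: assumes II: "R (n2,1,0) (1,1,0)" and x: "x \<in> HX n1 n2" and y: "y \<in> HX n1 n2"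
  shows "R x y \<longleftrightarrow> fst (snd x) = fst (snd y)"
proof
  assume "fst (snd x) = fst (snd y)"
  thus "R x y" using II_pos[OF II x] II_pos[OF II y] Rt Rs by metis
next
  assume r: "R x y"
  have "R (fst (snd x), fst (snd x), 0) (fst (snd y), fst (snd y), 0)"
    using II_pos[OF II x] II_pos[OF II y] Rt Rs r by metis
  moreover have "1 \<le> fst (snd x)" "fst (snd x) \<le> n2" "1 \<le> fst (snd y)" "fst (snd y) \<le> n2"
    using HX_range[OF x] HX_range[OF y] n by auto
  ultimately show "fst (snd x) = fst (snd y)" using aa_ne by blast
qed

lemma rel_cases: "(\<forall>x\<in>HX n1 n2. \<forall>y\<in>HX n1 n2. R x y \<longleftrightarrow> fst x = fst y) \<or>
   (\<forall>x\<in>HX n1 n2. \<forall>y\<in>HX n1 n2. R x y \<longleftrightarrow> fst (snd x) = fst (snd y))"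
  using K I_rel II_rel by blast

end


definition part :: "('a \<Rightarrow> nat) \<Rightarrow> 'a set \<Rightarrow> 'a set set" where
  "part f X = (\<lambda>x. {y\<in>X. f y = f x}) ` X"

lemma part_D:
  assumes "is_partition X P"
  shows "\<forall>A\<in>P. A \<noteq> {} \<and> A \<subseteq> X" "\<Union>P = X" "\<forall>A\<in>P. \<forall>B\<in>P. A \<noteq> B \<longrightarrow> A \<inter> B = {}"
  using assms unfolding is_partition_def by simp_all

lemma part_same: assumes "is_partition X P" "A \<in> P" "B \<in> P" "x \<in> A" "x \<in> B" shows "A = B"
proof (rule ccontr)
  assume "A \<noteq> B"
  hence "A \<inter> B = {}" using part_D(3)[OF assms(1)] assms(2,3) by simp
  thus False using assms(4,5) by blast
qed

lemma part_sub: assumes "is_partition X P" "A \<in> P" "y \<in> A" shows "y \<in> X"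
proof -
  have "A \<subseteq> X" using part_D(1)[OF assms(1)] assms(2) by simp
  thus ?thesis using assms(3) by (rule subsetD)
qed

lemma part_ex: assumes "is_partition X P" "x \<in> X" shows "\<exists>A\<in>P. x \<in> A"
proof -
  have "x \<in> \<Union>P" using part_D(2)[OF assms(1)] assms(2) by simp
  thus ?thesis by (rule UnionE) (rule bexI)
qed

lemma part_ne: assumes "is_partition X P" "A \<in> P" shows "\<exists>x. x \<in> A"
proof -
  have "A \<noteq> {}" using part_D(1)[OF assms(1)] assms(2) by simp
  thus ?thesis by (rule ex_in_conv[THEN iffD2])
qed

lemma class_eq:
  assumes p: "is_partition X P" and r: "\<forall>x\<in>X. \<forall>y\<in>X. rel P x y \<longleftrightarrow> f x = f y"
    and A: "A \<in> P" and x: "x \<in> A"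
  shows "A = {y\<in>X. f y = f x}"
proof (rule set_eqI)
  fix y
  have xX: "x \<in> X" using part_sub[OF p A x] .
  show "y \<in> A \<longleftrightarrow> y \<in> {y\<in>X. f y = f x}"
  proof
    assume y: "y \<in> A"
    have yX: "y \<in> X" using part_sub[OF p A y] .
    have "rel P y x" unfolding rel_def using A x y by blast
    hence "f y = f x" using r xX yX by blast
    thus "y \<in> {y\<in>X. f y = f x}" using yX by simp
  next
    assume "y \<in> {y\<in>X. f y = f x}"
    hence y: "y \<in> X" "f y = f x" by auto
    hence "rel P x y" using r xX by simp
    then obtain B where B: "B \<in> P" "x \<in> B" "y \<in> B" unfolding rel_def by blast
    have "B = A" using part_same[OF p B(1) A B(2) x] .
    thus "y \<in> A" using B(3) by simp
  qed
qed

lemma partition_eq: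
  assumes p: "is_partition X P" and r: "\<forall>x\<in>X. \<forall>y\<in>X. rel P x y \<longleftrightarrow> f x = f y"
  shows "P = part f X"
proof (rule set_eqI)
  fix C
  show "C \<in> P \<longleftrightarrow> C \<in> part f X"
  proof
    assume A: "C \<in> P"
    obtain x where x: "x \<in> C" using part_ne[OF p A] by blast
    have "C = {y\<in>X. f y = f x}" using class_eq[OF p r A x] .
    thus "C \<in> part f X" unfolding part_def using part_sub[OF p A x] by blast
  next
    assume "C \<in> part f X"
    then obtain x where x: "x \<in> X" "C = {y\<in>X. f y = f x}" unfolding part_def by blast
    obtain A where A: "A \<in> P" "x \<in> A" using part_ex[OF p x(1)] by blast
    have "A = C" using class_eq[OF p r A] x by simp
    thus "C \<in> P" using A by simp
  qed
qed

lemma rel_part: "rel (part f X) x y \<longleftrightarrow> x \<in> X \<and> y \<in> X \<and> f x = f y"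
  unfolding rel_def part_def by auto

lemma part_partition: "is_partition X (part f X)"
  unfolding is_partition_def part_def by auto

lemma card_part: "card (part f X) = card (f ` X)"
proof -
  have e: "part f X = (\<lambda>v. {y\<in>X. f y = v}) ` (f ` X)" unfolding part_def by auto
  have "inj_on (\<lambda>v. {y\<in>X. f y = v}) (f ` X)"
    by (rule inj_onI) auto
  thus ?thesis using e card_image by metis
qed

lemma part_coloring:
  assumes e: "\<forall>E\<in>B. (\<exists>x\<in>E. \<exists>y\<in>E. x \<noteq> y \<and> f x = f y) \<and> (\<exists>x\<in>E. \<exists>y\<in>E. f x \<noteq> f y)"
    and s: "\<forall>E\<in>B. E \<subseteq> X"
  shows "strict_coloring X B B (part f X) (card (f ` X))"
proof -
  have c: "\<forall>E\<in>B. \<exists>x\<in>E. \<exists>y\<in>E. x \<noteq> y \<and> rel (part f X) x y"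
  proof
    fix E assume E: "E \<in> B"
    then obtain x y where xy: "x \<in> E" "y \<in> E" "x \<noteq> y" "f x = f y" using e by blast
    have "x \<in> X" "y \<in> X" using s E xy by auto
    hence "rel (part f X) x y" using xy rel_part by metis
    thus "\<exists>x\<in>E. \<exists>y\<in>E. x \<noteq> y \<and> rel (part f X) x y" using xy by blast
  qed
  have d: "\<forall>E\<in>B. \<exists>x\<in>E. \<exists>y\<in>E. \<not> rel (part f X) x y"
  proof
    fix E assume E: "E \<in> B"
    then obtain x y where xy: "x \<in> E" "y \<in> E" "f x \<noteq> f y" using e by blast
    hence "\<not> rel (part f X) x y" using rel_part by metis
    thus "\<exists>x\<in>E. \<exists>y\<in>E. \<not> rel (part f X) x y" using xy by blast
  qed
  show ?thesis unfolding strict_coloring_def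
  proof (intro conjI)
    show "is_partition X (part f X)" by (rule part_partition)
    show "card (part f X) = card (f ` X)" by (rule card_part)
    show "\<forall>E\<in>B. \<exists>x\<in>E. \<exists>y\<in>E. x \<noteq> y \<and> (\<exists>A\<in>part f X. x \<in> A \<and> y \<in> A)"
      using c unfolding rel_def .
    show "\<forall>E\<in>B. \<exists>x\<in>E. \<exists>y\<in>E. \<not> (\<exists>A\<in>part f X. x \<in> A \<and> y \<in> A)"
      using d unfolding rel_def .
  qed
qed

lemma card32:
  assumes "card E = 3" "card (f ` E) = (2::nat)"
  shows "(\<exists>x\<in>E. \<exists>y\<in>E. x \<noteq> y \<and> f x = f y) \<and> (\<exists>x\<in>E. \<exists>y\<in>E. f x \<noteq> f y)"
proof
  have fin: "finite E" using assms(1) card.infinite by fastforce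
  show "\<exists>x\<in>E. \<exists>y\<in>E. x \<noteq> y \<and> f x = f y"
  proof (rule ccontr)
    assume "\<not> ?thesis"
    hence "inj_on f E" unfolding inj_on_def by blast
    thus False using card_image assms by fastforce
  qed
  show "\<exists>x\<in>E. \<exists>y\<in>E. f x \<noteq> f y"
  proof (rule ccontr)
    assume h: "\<not> ?thesis"
    obtain x where x: "x \<in> E" using assms(1) by fastforce
    have "f ` E \<subseteq> {f x}" using h x by blast
    hence "card (f ` E) \<le> 1" using card_mono[of "{f x}"] by fastforce
    thus False using assms by simp
  qed
qed

lemma HB_sub: assumes "E \<in> HB n1 n2" "n2 < n1" "1 \<le> n2" shows "E \<subseteq> HX n1 n2"
proof -
  have "E \<subseteq> HX n1 n2 \<or> E = {(1, 1, 0), (n2, 1, 0), (n2, n2, 0)}"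
    using assms(1) unfolding HB_def by blast
  moreover have "{(1, 1, 0), (n2, 1, 0), (n2, n2, 0)} \<subseteq> HX n1 n2"
    using a_in[of 1 n2 n1] a_in[of n2 n2 n1] c_in[of 0 n1 n2] assms by simp
  ultimately show ?thesis by blast
qed

lemma HB_fst: assumes "n2 < n1" "2 \<le> n2"
  shows "\<forall>E\<in>HB n1 n2. (\<exists>x\<in>E. \<exists>y\<in>E. x \<noteq> y \<and> fst x = fst y) \<and> (\<exists>x\<in>E. \<exists>y\<in>E. fst x \<noteq> fst y)"
proof
  fix E assume "E \<in> HB n1 n2"
  then consider "card E = 3" "card (coord 1 ` E) = 2" | "E = {(1, 1, 0), (n2, 1, 0), (n2, n2, 0)}"
    unfolding HB_def by blast
  thus "(\<exists>x\<in>E. \<exists>y\<in>E. x \<noteq> y \<and> fst x = fst y) \<and> (\<exists>x\<in>E. \<exists>y\<in>E. fst x \<noteq> fst y)"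
  proof cases
    case 1
    have "coord 1 = fst" by (rule ext) (simp add: coord_def)
    hence "card (fst ` E) = 2" using 1(2) by simp
    thus ?thesis by (rule card32[OF 1(1)])
  next
    case 2
    have m: "(1,1,0) \<in> E" "(n2,1,0) \<in> E" "(n2,n2,0) \<in> E" using 2 by simp_all
    have b1: "(n2,1,0) \<noteq> (n2,n2,0) \<and> fst (n2,1,0) = fst (n2,n2,0)" using assms by simp
    have b2: "fst (1,1,0) \<noteq> fst (n2,1,0)" using assms by simp
    show ?thesis
    proof
      show "\<exists>x\<in>E. \<exists>y\<in>E. x \<noteq> y \<and> fst x = fst y"
        using b1 m by blast
      show "\<exists>x\<in>E. \<exists>y\<in>E. fst x \<noteq> fst y"
        using b2 m by blast
    qed
  qed
qed

lemma HB_snd: assumes "n2 < n1" "2 \<le> n2"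
  shows "\<forall>E\<in>HB n1 n2. (\<exists>x\<in>E. \<exists>y\<in>E. x \<noteq> y \<and> fst (snd x) = fst (snd y)) \<and> (\<exists>x\<in>E. \<exists>y\<in>E. fst (snd x) \<noteq> fst (snd y))"
proof
  fix E assume "E \<in> HB n1 n2"
  then consider "card E = 3" "card (coord 2 ` E) = 2" | "E = {(1, 1, 0), (n2, 1, 0), (n2, n2, 0)}"
    unfolding HB_def by blast
  thus "(\<exists>x\<in>E. \<exists>y\<in>E. x \<noteq> y \<and> fst (snd x) = fst (snd y)) \<and> (\<exists>x\<in>E. \<exists>y\<in>E. fst (snd x) \<noteq> fst (snd y))"
  proof cases
    case 1
    have "coord 2 = (\<lambda>x. fst (snd x))" by (rule ext) (simp add: coord_def)
    hence "card ((\<lambda>x. fst (snd x)) ` E) = 2" using 1(2) by simp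
    thus ?thesis by (rule card32[OF 1(1)])
  next
    case 2
    have m: "(1,1,0) \<in> E" "(n2,1,0) \<in> E" "(n2,n2,0) \<in> E" using 2 by simp_all
    have b1: "(1,1,0) \<noteq> (n2,1,0) \<and> fst (snd (1,1,0)) = fst (snd (n2,1,0))" using assms by simp
    have b2: "fst (snd (1,1,0)) \<noteq> fst (snd (n2,n2,0))" using assms by simp
    show ?thesis
    proof
      show "\<exists>x\<in>E. \<exists>y\<in>E. x \<noteq> y \<and> fst (snd x) = fst (snd y)"
        using b1 m by blast
      show "\<exists>x\<in>E. \<exists>y\<in>E. fst (snd x) \<noteq> fst (snd y)"
        using b2 m by blast
    qed
  qed
qed

lemma img_fst: assumes "n2 < n1" "1 \<le> n2" shows "fst ` HX n1 n2 = {1..n1}"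
proof
  show "fst ` HX n1 n2 \<subseteq> {1..n1}" using HX_range assms by fastforce
  show "{1..n1} \<subseteq> fst ` HX n1 n2"
  proof
    fix v assume v: "v \<in> {1..n1}"
    show "v \<in> fst ` HX n1 n2"
    proof (cases "v \<le> n2")
      case True thus ?thesis using a_in[of v n2 n1] v by force
    next
      case False
      show ?thesis
      proof (cases "v < n1")
        case True
        hence "(n2 + (v - n2), 1, 0) \<in> HX n1 n2" using False by (intro c_in) auto
        thus ?thesis using False by force
      next
        case False2: False
        hence "v = n1" using v by auto
        thus ?thesis using e_in[of n1 n2] by force
      qed
    qed
  qed
qed

lemma img_snd: assumes "n2 < n1" "1 \<le> n2" shows "(\<lambda>x. fst (snd x)) ` HX n1 n2 = {1..n2}"
proof
  show "(\<lambda>x. fst (snd x)) ` HX n1 n2 \<subseteq> {1..n2}" using HX_range assms by fastforce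
  show "{1..n2} \<subseteq> (\<lambda>x. fst (snd x)) ` HX n1 n2"
  proof
    fix v assume v: "v \<in> {1..n2}"
    thus "v \<in> (\<lambda>x. fst (snd x)) ` HX n1 n2" using a_in[of v n2 n1] by force
  qed
qed

theorem lemma2p2:
  fixes n1 n2 :: nat
  assumes "n1 > n2" and "n2 \<ge> 2"
  shows "bi_one_realization (HX n1 n2) (HB n1 n2) {n1, n2}"
proof -
  define P1 where "P1 = part fst (HX n1 n2)"
  define P2 where "P2 = part (\<lambda>x. fst (snd x)) (HX n1 n2)"
  have sub: "\<forall>E\<in>HB n1 n2. E \<subseteq> HX n1 n2" using HB_sub assms by auto
  have c1: "strict_coloring (HX n1 n2) (HB n1 n2) (HB n1 n2) P1 n1"
    using part_coloring[OF HB_fst[OF assms] sub] img_fst[of n2 n1] assms unfolding P1_def by simp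
  have c2: "strict_coloring (HX n1 n2) (HB n1 n2) (HB n1 n2) P2 n2"
    using part_coloring[OF HB_snd[OF assms] sub] img_snd[of n2 n1] assms unfolding P2_def by simp
  have cardP1: "card P1 = n1" using c1 unfolding strict_coloring_def by blast
  have cardP2: "card P2 = n2" using c2 unfolding strict_coloring_def by blast
  have uniq: "P = P1 \<and> k = n1 \<or> P = P2 \<and> k = n2"
    if sc: "strict_coloring (HX n1 n2) (HB n1 n2) (HB n1 n2) P k" for P k
  proof -
    have p: "is_partition (HX n1 n2) P" using sc unfolding strict_coloring_def by blast
    have kc: "card P = k" using sc unfolding strict_coloring_def by blast
    have h1: "P = P1" if h: "\<forall>x\<in>HX n1 n2. \<forall>y\<in>HX n1 n2. rel P x y = (fst x = fst y)"
      using partition_eq[OF p h] P1_def by simp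
    have h2: "P = P2" if h: "\<forall>x\<in>HX n1 n2. \<forall>y\<in>HX n1 n2. rel P x y = (fst (snd x) = fst (snd y))"
      using partition_eq[OF p h] P2_def by simp
    have "P = P1 \<or> P = P2" using rel_cases[OF assms sc] h1 h2 by blast
    thus ?thesis using kc cardP1 cardP2 by blast
  qed
  have fs: "feasible_set (HX n1 n2) (HB n1 n2) (HB n1 n2) = {n1, n2}"
    unfolding feasible_set_def using uniq c1 c2 by blast
  have sp: "finite {P. strict_coloring (HX n1 n2) (HB n1 n2) (HB n1 n2) P k} \<and>
      spectrum_entry (HX n1 n2) (HB n1 n2) (HB n1 n2) k \<in> {0, 1}" for k
  proof -
    have sub: "{P. strict_coloring (HX n1 n2) (HB n1 n2) (HB n1 n2) P k} \<subseteq> {if k = n1 then P1 else P2}"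
      using uniq assms by auto
    have f: "finite {P. strict_coloring (HX n1 n2) (HB n1 n2) (HB n1 n2) P k}"
      using finite_subset[OF sub] by simp
    have "card {P. strict_coloring (HX n1 n2) (HB n1 n2) (HB n1 n2) P k} \<le> card {if k = n1 then P1 else P2}"
      using card_mono[OF _ sub] by simp
    moreover have "card {if k = n1 then P1 else P2} = 1" by simp
    ultimately have "card {P. strict_coloring (HX n1 n2) (HB n1 n2) (HB n1 n2) P k} = 0 \<or>
        card {P. strict_coloring (HX n1 n2) (HB n1 n2) (HB n1 n2) P k} = 1" by linarith
    thus ?thesis using f unfolding spectrum_entry_def by simp
  qed
  show ?thesis unfolding one_realization_def using fs sp by blast
qed


end
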